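(* Let $0<p<1$, $q=1-p$, and let $X\sim\mathcal{UNB}(2,p)$. Then $P(X=x)=p(1-p)^x$ for all $x=0,1,2,\dots$, i.e. $X$ is geometric with parameter $p$.
   Context: $\mathcal{UNB}(r,p)$ ($r>0$, $0<p<1$) is the law of $X$ where $N$ is negative binomial with $P(N=n)=\binom{r+n-1}{n}p^rq^n$, $n\ge0$, and $X\mid N=n$ is uniform on $\{0,1,\dots,n\}$; its pmf is $\frac{q^xp^r}{1+x}\binom{r+x-1}{x}{}_2F_1(1,r+x;2+x;q)$, where ${}_2F_1$ is the Gauss hypergeometric function. *)

theory Defs
  imports "HOL-Probability.Probability"
begin

definition negbin_weight :: "real \<Rightarrow> real \<Rightarrow> nat \<Rightarrow> real" where
  "negbin_weight r p n = ((r + real n - 1) gchoose n) * p powr r * (1 - p) ^ n"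

definition negbin_pmf :: "real \<Rightarrow> real \<Rightarrow> nat pmf" where
  "negbin_pmf r p = embed_pmf (negbin_weight r p)"

definition unb_pmf :: "real \<Rightarrow> real \<Rightarrow> nat pmf" where
  "unb_pmf r p = bind_pmf (negbin_pmf r p) (\<lambda>n. pmf_of_set {0..n})"

end

theory Submission
  imports Defs
begin

lemma w2:
  assumes "0 < p"
  shows "negbin_weight 2 p n = p^2 * ((1 + real n) * (1 - p) ^ n)"
proof -
  have "(2 + real n - 1) gchoose n = real (Suc n choose n)"
    using binomial_gbinomial[of "Suc n" n, where 'a=real] by (simp add: add.commute)
  also have "\<dots> = real n + 1" by (simp add: binomial_Suc_n)
  finally show ?thesis using assms
    by (simp add: negbin_weight_def powr_realpow)
qed

lemma negbin_pmf2:
  assumes "0 < p" "p < 1"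
  shows "pmf (negbin_pmf 2 p) n = p^2 * ((1 + real n) * (1 - p) ^ n)"
proof -
  have s: "(\<lambda>n. real (Suc n) * (1 - p) ^ n) sums (1 / (1 - (1 - p))^2)"
    by (rule geometric_deriv_sums) (use assms in auto)
  have e: "p^2 * (1 / (1 - (1 - p))^2) = 1" using assms by simp
  have s2: "(\<lambda>n. p^2 * ((1 + real n) * (1 - p) ^ n)) sums 1"
    using sums_mult[OF s, of "p^2"] unfolding e by simp
  have W: "negbin_weight 2 p = (\<lambda>n. p^2 * ((1 + real n) * (1 - p) ^ n))"
    using w2[OF assms(1)] by auto
  have nn: "\<And>n. 0 \<le> negbin_weight 2 p n" unfolding W using assms by simp
  have "(\<Sum>n. ennreal (p^2 * ((1 + real n) * (1 - p) ^ n))) = ennreal 1"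
    by (rule suminf_ennreal_eq[OF _ s2]) (use assms in simp)
  then have "(\<integral>\<^sup>+n. ennreal (negbin_weight 2 p n) \<partial>count_space UNIV) = 1"
    unfolding nn_integral_count_space_nat W by simp
  then have "pmf (embed_pmf (negbin_weight 2 p)) n = negbin_weight 2 p n"
    using pmf_embed_pmf[of "negbin_weight 2 p", OF nn] by blast
  then show ?thesis
    unfolding negbin_pmf_def W .
qed

theorem mainTheorem6:
  fixes p :: real and x :: nat
  assumes "0 < p" and "p < 1"
  shows "pmf (unb_pmf 2 p) x = p * (1 - p) ^ x"
proof -
  let ?f = "\<lambda>n. if x \<le> n then p^2 * (1 - p) ^ n else 0"
  have tm: "ennreal (pmf (negbin_pmf 2 p) n) * ennreal (pmf (pmf_of_set {0..n}) x) = ennreal (?f n)" for n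
    using assms by (simp add: negbin_pmf2 ennreal_mult'[symmetric] indicator_def)
  have g: "(\<lambda>n. p^2 * (1 - p) ^ x * (1 - p) ^ n) sums (p^2 * (1 - p) ^ x * (1 / (1 - (1 - p))))"
    by (rule sums_mult, rule geometric_sums) (use assms in auto)
  have g2: "(\<lambda>n. ?f (n + x)) sums (p * (1 - p) ^ x)"
    using g assms by (simp add: power_add power2_eq_square mult_ac)
  have fs: "?f sums (p * (1 - p) ^ x)"
  proof -
    have "(\<lambda>n. ?f (n + x)) sums (p * (1 - p) ^ x) \<longleftrightarrow> ?f sums (p * (1 - p) ^ x + (\<Sum>i<x. ?f i))"
      by (rule sums_iff_shift)
    moreover have "(\<Sum>i<x. ?f i) = 0" by simp
    ultimately show ?thesis using g2 by simp
  qed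
  have "ennreal (pmf (unb_pmf 2 p) x) = (\<Sum>n. ennreal (?f n))"
    unfolding unb_pmf_def ennreal_pmf_bind nn_integral_measure_pmf nn_integral_count_space_nat tm ..
  also have "\<dots> = ennreal (p * (1 - p) ^ x)"
    by (rule suminf_ennreal_eq[OF _ fs]) (use assms in auto)
  finally show ?thesis using assms by (simp add: ennreal_inj)
qed

end
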